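(* Let $G=(X,\Sigma,\longrightarrow,X_0)$ and $R=(Z,\Sigma,\longrightarrow,Z_0)$ be automata and take $\Sigma_r=\Sigma$. There exists a $\Sigma_{uc}$-admissible supervisor $S$ with $S\|G\simeq R$ if and only if there exists a $\Sigma_{ucr}$-controllability set $E$ from $G$ to $R$ (with $\Sigma_r=\Sigma$) such that $\gamma_R(\bigcup E_0)=Z_0$, i.e. $\forall z\in Z_0\,\exists W\in E_0\,\exists x_0\in X_0\,((x_0,z)\in W)$, where $E_0=\{W\in E:\forall x\in X_0\,\exists z\in Z_0\,((x,z)\in W)\text{ and }W\subseteq X_0\times Z_0\}$ and $\gamma_R(V)=\{z\in Z:(x,z)\in V\text{ for some }x\in X\}$.
   Context: An automaton is a 4-tuple $A=(Q,\Sigma,\longrightarrow,Q_0)$ with state set $Q$, finite event set $\Sigma$, ${\longrightarrow}\subseteq Q\times\Sigma\times Q$ and $\emptyset\neq Q_0\subseteq Q$. Write $q\xrightarrow{\sigma}q'$ for $(q,\sigma,q')\in{\longrightarrow}$, $q\xrightarrow{\sigma}$ if some such $q'$ exists; extend to strings. A state is reachable if reached from an initial state by some string. Events are partitioned into uncontrollable $\Sigma_{uc}$ and controllable $\Sigma_c$; $\Sigma_r\subseteq\Sigma$ denotes the set of required events. For a supervisor $S=(Y,\Sigma,\longrightarrow,Y_0)$, $S\|G=(Y\times X,\Sigma,\longrightarrow,Y_0\times X_0)$ with $(y,x)\xrightarrow{\sigma}(y',x')$ iff $y\xrightarrow{\sigma}y'$ and $x\xrightarrow{\sigma}x'$; $S$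 is $\Sigma_{uc}$-admissible w.r.t. $G$ if for every reachable $(y,x)$ of $S\|G$ and $\sigma\in\Sigma_{uc}$, $x\xrightarrow{\sigma}$ implies $(y,x)\xrightarrow{\sigma}$. For automata $A_1,A_2$ (state sets $Q_1,Q_2$, initial sets $Q_{01},Q_{02}$), $\Phi\subseteq Q_1\times Q_2$ is a simulation if every $q_0\in Q_{01}$ has $p_0\in Q_{02}$ with $(q_0,p_0)\in\Phi$ and for all $(q,p)\in\Phi$, $\sigma\in\Sigma$, $q\xrightarrow{\sigma}q'$ there is $p'$ with $p\xrightarrow{\sigma}p'$, $(q',p')\in\Phi$. $\Phi$ is a bisimulation if both $\Phi$ and $\Phi^{-1}=\{(p,q):(q,p)\in\Phi\}$ are simulations; $A_1\simeq A_2$ means a bisimulation exists. For $W,W'\subseteq X\times Z$: $\mathit{match}_{G,R}(W,\sigma,W')$ iff for all $(x,z)\in W$ and $x\xrightarrow{\sigma}x'$ there is $z'$ with $z\xrightarrow{\sigma}z'$ and $(x',z')\in W'$. $E\subseteq\wp(X\times Z)$ is a $\Sigma_{ucr}$-controllability set from $G$ to $R$ if: (istate) some $W_0\in E$ satisfies $\forall x_0\in X_0\,\exists z_0\in Z_0\,((x_0,z_0)\in W_0)$; (a) for every $W\in E$, $\sigma\in\Sigma_{uc}$ there is $W'\in E$ with $\mathit{match}_{G,R}(W,\sigma,W')$; (b) for every $W\in E$, $(x,z)\in W$, $\sigma\in\Sigma_r$, $z\xrightarrow{\sigma}z'$, there exist $x'$, $W'\in E$ with $x\xrightarrow{\sigma}x'$,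 $(x',z')\in W'$, $\mathit{match}_{G,R}(W,\sigma,W')$. *)

theory Defs
  imports Main
begin

record ('q, 'e) aut =
  st   :: "'q set"
  ev   :: "'e set"
  tr   :: "('q \<times> 'e \<times> 'q) set"
  init :: "'q set"

definition is_aut :: "('q, 'e) aut \<Rightarrow> bool" where
  "is_aut A \<longleftrightarrow> finite (ev A) \<and> tr A \<subseteq> st A \<times> ev A \<times> st A
      \<and> init A \<subseteq> st A \<and> init A \<noteq> {}"

inductive_set reach :: "('q, 'e) aut \<Rightarrow> 'q set" for A where
  reach_init: "q \<in> init A \<Longrightarrow> q \<in> reach A"
| reach_step: "q \<in> reach A \<Longrightarrow> (q, \<sigma>, q') \<in> tr A \<Longrightarrow> q' \<in> reach A"

definition sync :: "('y, 'e) aut \<Rightarrow> ('x, 'e) aut \<Rightarrow> ('y \<times> 'x, 'e) aut" where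
  "sync S G = \<lparr> st = st S \<times> st G, ev = ev G,
     tr = {((y, x), \<sigma>, (y', x')) | y x \<sigma> y' x'. (y, \<sigma>, y') \<in> tr S \<and> (x, \<sigma>, x') \<in> tr G},
     init = init S \<times> init G \<rparr>"

definition admissible :: "'e set \<Rightarrow> ('y, 'e) aut \<Rightarrow> ('x, 'e) aut \<Rightarrow> bool" where
  "admissible Sigma_uc S G \<longleftrightarrow> (\<forall>y x \<sigma> x'. (y, x) \<in> reach (sync S G) \<and> \<sigma> \<in> Sigma_uc \<and> (x, \<sigma>, x') \<in> tr G
      \<longrightarrow> (\<exists>p'. ((y, x), \<sigma>, p') \<in> tr (sync S G)))"

definition simulation :: "('p \<times> 'q) set \<Rightarrow> ('p, 'e) aut \<Rightarrow> ('q, 'e) aut \<Rightarrow> bool" where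
  "simulation \<Phi> A B \<longleftrightarrow>
     (\<forall>q0 \<in> init A. \<exists>p0 \<in> init B. (q0, p0) \<in> \<Phi>) \<and>
     (\<forall>q p \<sigma> q'. (q, p) \<in> \<Phi> \<and> \<sigma> \<in> ev A \<and> (q, \<sigma>, q') \<in> tr A
        \<longrightarrow> (\<exists>p'. (p, \<sigma>, p') \<in> tr B \<and> (q', p') \<in> \<Phi>))"

definition bisimulation :: "('p \<times> 'q) set \<Rightarrow> ('p, 'e) aut \<Rightarrow> ('q, 'e) aut \<Rightarrow> bool" where
  "bisimulation \<Phi> A B \<longleftrightarrow> simulation \<Phi> A B \<and> simulation (\<Phi>\<inverse>) B A"

definition bisimilar :: "('p, 'e) aut \<Rightarrow> ('q, 'e) aut \<Rightarrow> bool" where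
  "bisimilar A B \<longleftrightarrow> (\<exists>\<Phi>. bisimulation \<Phi> A B)"

definition "match" :: "('x, 'e) aut \<Rightarrow> ('z, 'e) aut \<Rightarrow> ('x \<times> 'z) set \<Rightarrow> 'e \<Rightarrow> ('x \<times> 'z) set \<Rightarrow> bool" where
  "match G R W \<sigma> W' \<longleftrightarrow> (\<forall>x z x'. (x, z) \<in> W \<and> (x, \<sigma>, x') \<in> tr G
      \<longrightarrow> (\<exists>z'. (z, \<sigma>, z') \<in> tr R \<and> (x', z') \<in> W'))"

definition ctrl_set :: "'e set \<Rightarrow> 'e set \<Rightarrow> ('x, 'e) aut \<Rightarrow> ('z, 'e) aut \<Rightarrow> ('x \<times> 'z) set set \<Rightarrow> bool" where
  "ctrl_set Sigma_uc Sigma_r G R E \<longleftrightarrow>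
     E \<subseteq> Pow (st G \<times> st R) \<and>
     (\<exists>W0 \<in> E. \<forall>x0 \<in> init G. \<exists>z0 \<in> init R. (x0, z0) \<in> W0) \<and>
     (\<forall>W \<in> E. \<forall>\<sigma> \<in> Sigma_uc. \<exists>W' \<in> E. match G R W \<sigma> W') \<and>
     (\<forall>W \<in> E. \<forall>x z \<sigma> z'. (x, z) \<in> W \<and> \<sigma> \<in> Sigma_r \<and> (z, \<sigma>, z') \<in> tr R
        \<longrightarrow> (\<exists>x' W'. (x, \<sigma>, x') \<in> tr G \<and> W' \<in> E \<and> (x', z') \<in> W' \<and> match G R W \<sigma> W'))"

definition E0 :: "('x, 'e) aut \<Rightarrow> ('z, 'e) aut \<Rightarrow> ('x \<times> 'z) set set \<Rightarrow> ('x \<times> 'z) set set" where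
  "E0 G R E = {W \<in> E. (\<forall>x \<in> init G. \<exists>z \<in> init R. (x, z) \<in> W) \<and> W \<subseteq> init G \<times> init R}"

definition gammaR :: "('x, 'e) aut \<Rightarrow> ('x \<times> 'z) set \<Rightarrow> 'z set" where
  "gammaR G V = {z. \<exists>x \<in> st G. (x, z) \<in> V}"

end

theory Submission
  imports Defs
begin

lemma sync_tr: "(((y, x), \<sigma>, (y', x')) \<in> tr (sync S G)) = ((y, \<sigma>, y') \<in> tr S \<and> (x, \<sigma>, x') \<in> tr G)"
  by (simp add: sync_def)

lemma sync_tr': "(p, \<sigma>, p') \<in> tr (sync S G) \<Longrightarrow> (fst p, \<sigma>, fst p') \<in> tr S \<and> (snd p, \<sigma>, snd p') \<in> tr G"
  by (auto simp add: sync_def)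

lemma sync_simps: "ev (sync S G) = ev G" "init (sync S G) = init S \<times> init G" "st (sync S G) = st S \<times> st G"
  by (simp_all add: sync_def)

lemma reach_st: assumes "is_aut A" shows "q \<in> reach A \<Longrightarrow> q \<in> st A"
  by (induct rule: reach.induct) (use assms in \<open>auto simp: is_aut_def\<close>)

lemma match_mono: "W1 \<subseteq> W2 \<Longrightarrow> match G R W2 \<sigma> W' \<Longrightarrow> match G R W1 \<sigma> W'"
  unfolding match_def by blast

lemma dirA:
  fixes S :: "('y,'e) aut" and G :: "('x, 'e) aut" and R :: "('z, 'e) aut"
  assumes G: "is_aut G" and R: "is_aut R" and evR: "ev R = ev G"
    and S: "is_aut S" "ev S = ev G" and adm: "admissible Sigma_uc S G" and bis: "bisimilar (sync S G) R"
  shows "\<exists>E. ctrl_set Sigma_uc (ev G) G R E \<and> gammaR G (\<Union> (E0 G R E)) = init R"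
proof -
  obtain \<Phi> where s1: "simulation \<Phi> (sync S G) R" and s2: "simulation (\<Phi>\<inverse>) R (sync S G)"
    using bis unfolding bisimilar_def bisimulation_def by blast
  have isS: "is_aut (sync S G)" using S G unfolding is_aut_def sync_def by auto
  define W where "W y = {(x,z). (y,x) \<in> reach (sync S G) \<and> ((y,x),z) \<in> \<Phi> \<and> z \<in> st R}" for y
  define I where "I y = {(x,z). x \<in> init G \<and> z \<in> init R \<and> ((y,x),z) \<in> \<Phi>}" for y
  define E where "E = range W \<union> I ` init S"
  have IW: "I y \<subseteq> W y" if "y \<in> init S" for y
    using that R unfolding I_def W_def is_aut_def
    by (auto intro: reach.reach_init simp: sync_simps)
  have key: "match G R (W y) \<sigma> (W y')" if "(y, \<sigma>, y') \<in> tr S" for y \<sigma> y'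
    unfolding match_def
  proof (intro allI impI)
    fix x z x' assume a: "(x, z) \<in> W y \<and> (x, \<sigma>, x') \<in> tr G"
    have ev: "\<sigma> \<in> ev (sync S G)" using a G by (auto simp: is_aut_def sync_simps)
    have t: "((y,x),\<sigma>,(y',x')) \<in> tr (sync S G)" using a that by (simp add: sync_tr)
    have "((y,x),z) \<in> \<Phi>" "(y,x) \<in> reach (sync S G)" using a by (auto simp: W_def)
    then obtain p' where p: "(z,\<sigma>,p') \<in> tr R" "((y',x'),p') \<in> \<Phi>"
      using s1 t ev unfolding simulation_def by blast
    have "p' \<in> st R" using p R by (auto simp: is_aut_def)
    moreover have "(y',x') \<in> reach (sync S G)" using \<open>(y,x) \<in> reach (sync S G)\<close> t by (rule reach.reach_step)
    ultimately show "\<exists>z'. (z, \<sigma>, z') \<in> tr R \<and> (x', z') \<in> W y'" using p by (auto simp: W_def)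
  qed
  have E0I: "I y \<in> E0 G R E" if "y \<in> init S" for y
  proof -
    have "\<forall>x \<in> init G. \<exists>z \<in> init R. (x, z) \<in> I y"
    proof
      fix x assume "x \<in> init G"
      then have "(y,x) \<in> init (sync S G)" using that by (simp add: sync_simps)
      then obtain p0 where "p0 \<in> init R" "((y,x),p0) \<in> \<Phi>" using s1 unfolding simulation_def by blast
      then show "\<exists>z \<in> init R. (x, z) \<in> I y" using \<open>x \<in> init G\<close> by (auto simp: I_def)
    qed
    then show ?thesis using that unfolding E0_def E_def I_def by auto
  qed
  have ctrl: "ctrl_set Sigma_uc (ev G) G R E"
    unfolding ctrl_set_def
  proof (intro conjI)
    show "E \<subseteq> Pow (st G \<times> st R)"
    proof
      fix V assume "V \<in> E"
      then show "V \<in> Pow (st G \<times> st R)"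
        unfolding E_def
      proof
        assume "V \<in> range W"
        then show ?thesis using reach_st[OF isS] by (auto simp: W_def sync_simps)
      next
        assume "V \<in> I ` init S"
        then show ?thesis using G R by (auto simp: I_def is_aut_def)
      qed
    qed
  next
    obtain y0 where "y0 \<in> init S" using S by (auto simp: is_aut_def)
    then show "\<exists>W0\<in>E. \<forall>x0\<in>init G. \<exists>z0\<in>init R. (x0, z0) \<in> W0"
      using E0I unfolding E0_def by blast
  next
    have aW: "\<exists>W'\<in>E. match G R (W y) \<sigma> W'" if suc: "\<sigma> \<in> Sigma_uc" for y \<sigma>
    proof (cases "\<exists>y'. (y, \<sigma>, y') \<in> tr S")
      case True
      then obtain y' where "(y, \<sigma>, y') \<in> tr S" by blast
      then show ?thesis using key unfolding E_def by blast
    next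
      case False
      have "match G R (W y) \<sigma> (W y)"
        unfolding match_def
      proof (intro allI impI)
        fix x z x' assume a: "(x, z) \<in> W y \<and> (x, \<sigma>, x') \<in> tr G"
        then have "(y,x) \<in> reach (sync S G)" by (auto simp: W_def)
        then obtain p' where "((y,x),\<sigma>,p') \<in> tr (sync S G)"
          using adm a suc unfolding admissible_def by blast
        then have "(y, \<sigma>, fst p') \<in> tr S" using sync_tr' by fastforce
        then show "\<exists>z'. (z, \<sigma>, z') \<in> tr R \<and> (x', z') \<in> W y" using False by blast
      qed
      then show ?thesis unfolding E_def by blast
    qed
    show "\<forall>V\<in>E. \<forall>\<sigma>\<in>Sigma_uc. \<exists>W'\<in>E. match G R V \<sigma> W'"
    proof (intro ballI)
      fix V \<sigma> assume V: "V \<in> E" and s: "\<sigma> \<in> Sigma_uc"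
      from V[unfolded E_def] show "\<exists>W'\<in>E. match G R V \<sigma> W'"
      proof
        assume "V \<in> range W"
        then obtain y where "V = W y" by blast
        then show ?thesis using aW[OF s, of y] by simp
      next
        assume "V \<in> I ` init S"
        then obtain y where y: "y \<in> init S" "V = I y" by blast
        obtain W' where w: "W' \<in> E" "match G R (W y) \<sigma> W'" using aW[OF s, of y] by blast
        have "match G R V \<sigma> W'" using y(2) match_mono[OF IW[OF y(1)] w(2)] by simp
        then show ?thesis using w(1) by blast
      qed
    qed
  next
    have bW: "\<exists>x' W'. (x, \<sigma>, x') \<in> tr G \<and> W' \<in> E \<and> (x', z') \<in> W' \<and> match G R (W y) \<sigma> W'"
      if a: "(x,z) \<in> W y" "\<sigma> \<in> ev G" "(z, \<sigma>, z') \<in> tr R" for x z \<sigma> z' y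
    proof -
      have "(z,(y,x)) \<in> \<Phi>\<inverse>" "(y,x) \<in> reach (sync S G)" using a by (auto simp: W_def)
      moreover have "\<sigma> \<in> ev R" using a evR by simp
      moreover have st: "\<forall>q p \<sigma> q'. (q, p) \<in> \<Phi>\<inverse> \<and> \<sigma> \<in> ev R \<and> (q, \<sigma>, q') \<in> tr R
        \<longrightarrow> (\<exists>p'. (p, \<sigma>, p') \<in> tr (sync S G) \<and> (q', p') \<in> \<Phi>\<inverse>)"
        using s2 unfolding simulation_def by (elim conjE)
      ultimately obtain p' where p: "((y,x),\<sigma>,p') \<in> tr (sync S G)" "(z',p') \<in> \<Phi>\<inverse>"
        using a(3) by blast
      obtain y' x' where pp: "p' = (y',x')" by (cases p') auto
      have t: "(y,\<sigma>,y') \<in> tr S" "(x,\<sigma>,x') \<in> tr G" using p pp by (auto simp: sync_tr)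
      have "(y',x') \<in> reach (sync S G)" using \<open>(y,x) \<in> reach (sync S G)\<close> p(1) pp by (metis reach.reach_step)
      moreover have "z' \<in> st R" using a R by (auto simp: is_aut_def)
      ultimately have "(x',z') \<in> W y'" using p pp by (auto simp: W_def)
      then show ?thesis using t key[OF t(1)] unfolding E_def by blast
    qed
    show "\<forall>V\<in>E. \<forall>x z \<sigma> z'. (x, z) \<in> V \<and> \<sigma> \<in> ev G \<and> (z, \<sigma>, z') \<in> tr R \<longrightarrow>
        (\<exists>x' W'. (x, \<sigma>, x') \<in> tr G \<and> W' \<in> E \<and> (x', z') \<in> W' \<and> match G R V \<sigma> W')"
    proof (intro ballI allI impI)
      fix V x z \<sigma> z' assume V: "V \<in> E" and h: "(x, z) \<in> V \<and> \<sigma> \<in> ev G \<and> (z, \<sigma>, z') \<in> tr R"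
      from V[unfolded E_def] show "\<exists>x' W'. (x, \<sigma>, x') \<in> tr G \<and> W' \<in> E \<and> (x', z') \<in> W' \<and> match G R V \<sigma> W'"
      proof
        assume "V \<in> range W"
        then obtain y where "V = W y" by blast
        then show ?thesis using bW[of x z y \<sigma> z'] h by simp
      next
        assume "V \<in> I ` init S"
        then obtain y where y: "y \<in> init S" "V = I y" by blast
        then have "(x,z) \<in> W y" using IW h by blast
        then obtain x' W' where c: "(x, \<sigma>, x') \<in> tr G" "W' \<in> E" "(x', z') \<in> W'" "match G R (W y) \<sigma> W'"
          using bW[of x z y \<sigma> z'] h by blast
        have "match G R V \<sigma> W'" using y(2) match_mono[OF IW[OF y(1)] c(4)] by simp
        then show ?thesis using c by blast
      qed
    qed
  qed
  have gam: "gammaR G (\<Union> (E0 G R E)) = init R"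
  proof
    show "gammaR G (\<Union> (E0 G R E)) \<subseteq> init R" unfolding gammaR_def E0_def by blast
  next
    show "init R \<subseteq> gammaR G (\<Union> (E0 G R E))"
    proof
      fix z assume z: "z \<in> init R"
      then obtain p0 where p0: "p0 \<in> init (sync S G)" "(z,p0) \<in> \<Phi>\<inverse>" using s2 unfolding simulation_def by blast
      obtain y x where pp: "p0 = (y,x)" by (cases p0) auto
      have y: "y \<in> init S" "x \<in> init G" using p0 pp by (auto simp: sync_simps)
      have "(x,z) \<in> I y" using y z p0 pp by (auto simp: I_def)
      moreover have "x \<in> st G" using y G by (auto simp: is_aut_def)
      ultimately show "z \<in> gammaR G (\<Union> (E0 G R E))" using E0I[OF y(1)] unfolding gammaR_def by blast
    qed
  qed
  show ?thesis using ctrl gam by blast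
qed

lemma dirB:
  fixes G :: "('x, 'e) aut" and R :: "('z, 'e) aut"
  assumes G: "is_aut G" and R: "is_aut R" and evR: "ev R = ev G" and uc: "Sigma_uc \<subseteq> ev G"
    and E: "ctrl_set Sigma_uc (ev G) G R E" and gam: "gammaR G (\<Union> (E0 G R E)) = init R"
  shows "\<exists>S :: (('x \<times> 'z) set, 'e) aut. is_aut S \<and> ev S = ev G \<and>
              admissible Sigma_uc S G \<and> bisimilar (sync S G) R"
proof -
  define S :: "(('x \<times> 'z) set, 'e) aut" where
    "S = \<lparr> st = E, ev = ev G, tr = {(W,\<sigma>,W'). W \<in> E \<and> W' \<in> E \<and> \<sigma> \<in> ev G \<and> match G R W \<sigma> W'},
          init = E0 G R E \<rparr>"
  have Ea: "\<forall>W \<in> E. \<forall>\<sigma> \<in> Sigma_uc. \<exists>W' \<in> E. match G R W \<sigma> W'"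
   and Eb: "\<forall>W \<in> E. \<forall>x z \<sigma> z'. (x, z) \<in> W \<and> \<sigma> \<in> ev G \<and> (z, \<sigma>, z') \<in> tr R
        \<longrightarrow> (\<exists>x' W'. (x, \<sigma>, x') \<in> tr G \<and> W' \<in> E \<and> (x', z') \<in> W' \<and> match G R W \<sigma> W')"
    using E unfolding ctrl_set_def by blast+
  have E0E: "E0 G R E \<subseteq> E" unfolding E0_def by blast
  have ne: "E0 G R E \<noteq> {}"
  proof -
    obtain z where "z \<in> init R" using R by (auto simp: is_aut_def)
    then show ?thesis using gam unfolding gammaR_def by auto
  qed
  have isS: "is_aut S" using G ne E0E unfolding S_def is_aut_def by auto
  have reachE: "fst p \<in> E" if "p \<in> reach (sync S G)" for p
    using that
  proof (induct rule: reach.induct)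
    case (reach_init q) then show ?case using E0E by (auto simp: sync_simps S_def)
  next
    case (reach_step q \<sigma> q') then show ?case using sync_tr'[OF reach_step(3)] by (auto simp: S_def)
  qed
  have adm: "admissible Sigma_uc S G"
    unfolding admissible_def
  proof (intro allI impI)
    fix y x \<sigma> x' assume a: "(y, x) \<in> reach (sync S G) \<and> \<sigma> \<in> Sigma_uc \<and> (x, \<sigma>, x') \<in> tr G"
    then have "y \<in> E" using reachE by fastforce
    then obtain W' where "W' \<in> E" "match G R y \<sigma> W'" using Ea a by blast
    then have "(y,\<sigma>,W') \<in> tr S" using a uc \<open>y \<in> E\<close> by (auto simp: S_def)
    then show "\<exists>p'. ((y, x), \<sigma>, p') \<in> tr (sync S G)" using a by (auto simp: sync_tr)
  qed
  define \<Phi> :: "((('x \<times> 'z) set \<times> 'x) \<times> 'z) set" where "\<Phi> = {((W,x),z). W \<in> E \<and> (x,z) \<in> W}"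
  have sim1: "simulation \<Phi> (sync S G) R"
    unfolding simulation_def
  proof (intro conjI ballI allI impI)
    fix q0 assume "q0 \<in> init (sync S G)"
    then obtain W x where q: "q0 = (W,x)" "W \<in> E0 G R E" "x \<in> init G" by (auto simp: sync_simps S_def)
    then show "\<exists>p0\<in>init R. (q0, p0) \<in> \<Phi>" using E0E unfolding E0_def \<Phi>_def by auto
  next
    fix q p \<sigma> q' assume a: "(q, p) \<in> \<Phi> \<and> \<sigma> \<in> ev (sync S G) \<and> (q, \<sigma>, q') \<in> tr (sync S G)"
    obtain W x where q: "q = (W,x)" by (cases q) auto
    obtain W' x' where q': "q' = (W',x')" by (cases q') auto
    have t: "(W,\<sigma>,W') \<in> tr S" "(x,\<sigma>,x') \<in> tr G" using a q q' by (auto simp: sync_tr)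
    then have "match G R W \<sigma> W'" "W' \<in> E" by (auto simp: S_def)
    then show "\<exists>p'. (p, \<sigma>, p') \<in> tr R \<and> (q', p') \<in> \<Phi>"
      using a q q' t unfolding match_def \<Phi>_def by auto
  qed
  have sim2: "simulation (\<Phi>\<inverse>) R (sync S G)"
    unfolding simulation_def
  proof (intro conjI ballI allI impI)
    fix z assume z: "z \<in> init R"
    then obtain W x where W: "W \<in> E0 G R E" "(x,z) \<in> W" using gam unfolding gammaR_def by blast
    then have "x \<in> init G" unfolding E0_def by blast
    then show "\<exists>p0\<in>init (sync S G). (z, p0) \<in> \<Phi>\<inverse>" using W E0E
      by (auto simp: sync_simps S_def \<Phi>_def)
  next
    fix z p \<sigma> z' assume a: "(z, p) \<in> \<Phi>\<inverse> \<and> \<sigma> \<in> ev R \<and> (z, \<sigma>, z') \<in> tr R"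
    obtain W x where p: "p = (W,x)" by (cases p) auto
    have "(x,z) \<in> W" "W \<in> E" using a p by (auto simp: \<Phi>_def)
    then obtain x' W' where b: "(x, \<sigma>, x') \<in> tr G" "W' \<in> E" "(x', z') \<in> W'" "match G R W \<sigma> W'"
      using Eb a evR by blast
    then have "(W,\<sigma>,W') \<in> tr S" using \<open>W \<in> E\<close> a evR by (auto simp: S_def)
    then have "(p, \<sigma>, (W',x')) \<in> tr (sync S G)" using b p by (simp add: sync_tr)
    then show "\<exists>p'. (p, \<sigma>, p') \<in> tr (sync S G) \<and> (z', p') \<in> \<Phi>\<inverse>" using b by (auto simp: \<Phi>_def)
  qed
  have "ev S = ev G" by (simp add: S_def)
  then show ?thesis using isS adm sim1 sim2 unfolding bisimilar_def bisimulation_def by blast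
qed

theorem corollary3:
  fixes G :: "('x, 'e) aut" and R :: "('z, 'e) aut" and Sigma_uc Sigma_c :: "'e set"
  assumes "is_aut G" and "is_aut R" and "ev R = ev G"
    and "Sigma_uc \<inter> Sigma_c = {}" and "Sigma_uc \<union> Sigma_c = ev G"
  shows "((\<exists>S :: (('x \<times> 'z) set, 'e) aut. is_aut S \<and> ev S = ev G \<and>
              admissible Sigma_uc S G \<and> bisimilar (sync S G) R)
          \<longleftrightarrow> (\<exists>E. ctrl_set Sigma_uc (ev G) G R E \<and> gammaR G (\<Union> (E0 G R E)) = init R))
      \<and> (\<forall>S :: ('y, 'e) aut. is_aut S \<and> ev S = ev G \<and>
              admissible Sigma_uc S G \<and> bisimilar (sync S G) R
          \<longrightarrow> (\<exists>E. ctrl_set Sigma_uc (ev G) G R E \<and> gammaR G (\<Union> (E0 G R E)) = init R))"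
proof -
  have uc: "Sigma_uc \<subseteq> ev G" using assms(5) by blast
  have A1: "\<forall>S :: (('x \<times> 'z) set, 'e) aut. is_aut S \<and> ev S = ev G \<and>
              admissible Sigma_uc S G \<and> bisimilar (sync S G) R
          \<longrightarrow> (\<exists>E. ctrl_set Sigma_uc (ev G) G R E \<and> gammaR G (\<Union> (E0 G R E)) = init R)"
    using dirA[OF assms(1,2,3)] by blast
  have A2: "\<forall>S :: ('y, 'e) aut. is_aut S \<and> ev S = ev G \<and>
              admissible Sigma_uc S G \<and> bisimilar (sync S G) R
          \<longrightarrow> (\<exists>E. ctrl_set Sigma_uc (ev G) G R E \<and> gammaR G (\<Union> (E0 G R E)) = init R)"
    using dirA[OF assms(1,2,3)] by blast
  show ?thesis
    using A1 A2 dirB[OF assms(1,2,3) uc] by blast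
qed

end
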